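(* Let $\mathfrak{g}$ be a finite-dimensional Leibniz algebra with free presentation $0\to\mathfrak{r}\to\mathfrak{f}\xrightarrow{\rho}\mathfrak{g}\to0$, let $\mathfrak{n}$ be a two-sided ideal of $\mathfrak{g}$, and let $\mathfrak{s}$ be a two-sided ideal of $\mathfrak{f}$ with $\rho(\mathfrak{s})=\mathfrak{n}$. Then $$\dim\mathcal{M}^{\mathrm{Lie}}(\mathfrak{g}/\mathfrak{n})+\dim\frac{\mathfrak{r}\cap[\mathfrak{f},\mathfrak{s}]_{\mathrm{Lie}}}{[\mathfrak{f},\mathfrak{r}]_{\mathrm{Lie}}\cap[\mathfrak{f},\mathfrak{s}]_{\mathrm{Lie}}}=\dim\mathcal{M}^{\mathrm{Lie}}(\mathfrak{g})+\dim\frac{\mathfrak{n}\cap[\mathfrak{g},\mathfrak{g}]_{\mathrm{Lie}}}{[\mathfrak{g},\mathfrak{n}]_{\mathrm{Lie}}}.$$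
   Context: Fix a field $\mathbb{K}$ with $\frac12\in\mathbb{K}$. A Leibniz algebra is a $\mathbb{K}$-vector space with a bilinear bracket satisfying $[x,[y,z]]=[[x,y],z]-[[x,z],y]$. For two-sided ideals $\mathfrak{m},\mathfrak{n}$, $[\mathfrak{m},\mathfrak{n}]_{\mathrm{Lie}}$ is the subspace spanned by all $[m,n]+[n,m]$. A free presentation is $0\to\mathfrak{r}\to\mathfrak{f}\to\mathfrak{g}\to0$ with $\mathfrak{f}$ free Leibniz. The Schur $\mathrm{Lie}$-multiplier is $\mathcal{M}^{\mathrm{Lie}}(\mathfrak{g})=\frac{\mathfrak{r}\cap[\mathfrak{f},\mathfrak{f}]_{\mathrm{Lie}}}{[\mathfrak{f},\mathfrak{r}]_{\mathrm{Lie}}}$, independent of the presentation up to isomorphism. *)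

theory Defs
  imports Complex_Main
begin

text \<open>Leibniz algebras (right Leibniz identity as in the paper) over a field 'k,
  carried by a whole type 'a with a scalar multiplication sc and bracket br.\<close>

definition leibniz_algebra ::
  "('k::field \<Rightarrow> 'a::ab_group_add \<Rightarrow> 'a) \<Rightarrow> ('a \<Rightarrow> 'a \<Rightarrow> 'a) \<Rightarrow> bool" where
  "leibniz_algebra sc br \<longleftrightarrow>
     vector_space sc \<and>
     (\<forall>x y z. br (x + y) z = br x z + br y z) \<and>
     (\<forall>x y z. br x (y + z) = br x y + br x z) \<and>
     (\<forall>a x y. br (sc a x) y = sc a (br x y)) \<and>
     (\<forall>a x y. br x (sc a y) = sc a (br x y)) \<and>
     (\<forall>x y z. br x (br y z) = br (br x y) z - br (br x z) y)"

definition two_sided_ideal ::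
  "('k::field \<Rightarrow> 'a::ab_group_add \<Rightarrow> 'a) \<Rightarrow> ('a \<Rightarrow> 'a \<Rightarrow> 'a) \<Rightarrow> 'a set \<Rightarrow> bool" where
  "two_sided_ideal sc br I \<longleftrightarrow>
     module.subspace sc I \<and> (\<forall>x\<in>I. \<forall>y. br x y \<in> I \<and> br y x \<in> I)"

definition lie_comm ::
  "('k::field \<Rightarrow> 'a::ab_group_add \<Rightarrow> 'a) \<Rightarrow> ('a \<Rightarrow> 'a \<Rightarrow> 'a) \<Rightarrow> 'a set \<Rightarrow> 'a set \<Rightarrow> 'a set" where
  "lie_comm sc br M N = module.span sc {br m n + br n m | m n. m \<in> M \<and> n \<in> N}"

definition leibniz_hom ::
  "('k::field \<Rightarrow> 'a::ab_group_add \<Rightarrow> 'a) \<Rightarrow> ('a \<Rightarrow> 'a \<Rightarrow> 'a) \<Rightarrow>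
   ('k \<Rightarrow> 'b::ab_group_add \<Rightarrow> 'b) \<Rightarrow> ('b \<Rightarrow> 'b \<Rightarrow> 'b) \<Rightarrow> ('a \<Rightarrow> 'b) \<Rightarrow> bool" where
  "leibniz_hom sc1 br1 sc2 br2 h \<longleftrightarrow>
     Vector_Spaces.linear sc1 sc2 h \<and> (\<forall>x y. h (br1 x y) = br2 (h x) (h y))"

definition left_normed :: "('a \<Rightarrow> 'a \<Rightarrow> 'a) \<Rightarrow> 'a list \<Rightarrow> 'a" where
  "left_normed br w = foldl br (hd w) (tl w)"

text \<open>Free (right) Leibniz algebra on X: the left-normed monomials in the letters of X
  (words of length >= 1) are pairwise distinct and form a basis (Loday--Pirashvili).\<close>
definition free_leibniz_on ::
  "('k::field \<Rightarrow> 'a::ab_group_add \<Rightarrow> 'a) \<Rightarrow> ('a \<Rightarrow> 'a \<Rightarrow> 'a) \<Rightarrow> 'a set \<Rightarrow> bool" where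
  "free_leibniz_on sc br X \<longleftrightarrow>
     leibniz_algebra sc br \<and>
     (let W = {w. w \<noteq> [] \<and> set w \<subseteq> X} in
        inj_on (left_normed br) W \<and>
        \<not> module.dependent sc (left_normed br ` W) \<and>
        module.span sc (left_normed br ` W) = UNIV)"

definition free_leibniz ::
  "('k::field \<Rightarrow> 'a::ab_group_add \<Rightarrow> 'a) \<Rightarrow> ('a \<Rightarrow> 'a \<Rightarrow> 'a) \<Rightarrow> bool" where
  "free_leibniz sc br \<longleftrightarrow> (\<exists>X. free_leibniz_on sc br X)"

definition fin_dim :: "('k::field \<Rightarrow> 'a::ab_group_add \<Rightarrow> 'a) \<Rightarrow> bool" where
  "fin_dim sc \<longleftrightarrow> (\<exists>B. finite B \<and> module.span sc B = UNIV)"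

text \<open>dim (A / B) for subspaces (intended B \<subseteq> A; in general this is dim A/(A \<inter> B)),
  computed as the dimension of a complement of A \<inter> B in A.\<close>
definition quot_dim ::
  "('k::field \<Rightarrow> 'a::ab_group_add \<Rightarrow> 'a) \<Rightarrow> 'a set \<Rightarrow> 'a set \<Rightarrow> nat" where
  "quot_dim sc A B = vector_space.dim sc
     (SOME C. module.subspace sc C \<and> C \<subseteq> A \<and> C \<inter> B = {0} \<and>
              A \<subseteq> {c + b | c b. c \<in> C \<and> b \<in> A \<inter> B})"

text \<open>dim M^Lie computed from a free presentation 0 -> r -> f -> h -> 0 with kernel r:
  dim (r \<inter> [f,f]_Lie) / [f,r]_Lie.\<close>
definition schur_lie_dim ::
  "('k::field \<Rightarrow> 'a::ab_group_add \<Rightarrow> 'a) \<Rightarrow> ('a \<Rightarrow> 'a \<Rightarrow> 'a) \<Rightarrow> 'a set \<Rightarrow> nat" where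
  "schur_lie_dim sc br r =
     quot_dim sc (r \<inter> lie_comm sc br UNIV UNIV) (lie_comm sc br UNIV r)"

end

theory Submission
  imports Defs
begin

definition iscomp :: "('k::field \<Rightarrow> 'a::ab_group_add \<Rightarrow> 'a) \<Rightarrow> 'a set \<Rightarrow> 'a set \<Rightarrow> 'a set \<Rightarrow> bool" where
  "iscomp sc A B C \<longleftrightarrow> module.subspace sc C \<and> C \<subseteq> A \<and> C \<inter> B = {0} \<and>
              A \<subseteq> {c + b | c b. c \<in> C \<and> b \<in> A \<inter> B}"

definition fdim :: "('k::field \<Rightarrow> 'a::ab_group_add \<Rightarrow> 'a) \<Rightarrow> 'a set \<Rightarrow> bool" where
  "fdim sc X \<longleftrightarrow> (\<exists>S. finite S \<and> X \<subseteq> module.span sc S)"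

definition qfd :: "('k::field \<Rightarrow> 'a::ab_group_add \<Rightarrow> 'a) \<Rightarrow> 'a set \<Rightarrow> 'a set \<Rightarrow> bool" where
  "qfd sc A B \<longleftrightarrow> fdim sc (SOME C. iscomp sc A B C)"

lemma quot_dim_alt: "quot_dim sc A B = vector_space.dim sc (SOME C. iscomp sc A B C)"
  unfolding quot_dim_def iscomp_def by simp

context vector_space begin

lemma comp_exists:
  assumes A: "subspace A" and B: "subspace B"
  shows "\<exists>C. iscomp scale A B C"
proof -
  obtain S where S: "S \<subseteq> A \<inter> B" "independent S" "A \<inter> B \<subseteq> span S" "card S = dim (A \<inter> B)"
    by (rule basis_exists)
  have SA: "S \<subseteq> A" using S(1) by simp
  obtain T where T: "S \<subseteq> T" "T \<subseteq> A" "independent T" "A \<subseteq> span T"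
    by (rule maximal_independent_subset_extend[OF SA S(2)])
  interpret P: vector_space_pair scale scale by unfold_locales
  from P.linear_independent_extend[OF T(3), where f="\<lambda>x. if x \<in> S then 0 else x"]
  obtain p where p: "Vector_Spaces.linear scale scale p" "\<forall>x\<in>T. p x = (if x \<in> S then 0 else x)"
    by blast
  have AB: "subspace (A \<inter> B)" using subspace_inter[OF A B] .
  have spanS: "span S = A \<inter> B"
    using span_minimal[OF S(1) AB] S(3) by (rule subset_antisym)
  define C where "C = span (T - S)"
  have "T - S \<subseteq> A" using T(2) by auto
  then have CA: "C \<subseteq> A" unfolding C_def by (rule span_minimal[OF _ A])
  have p1: "p x = x" if "x \<in> C" for x
  proof -
    have "p x = id x"
    proof (rule P.linear_eq_on[OF p(1) linear_id])
      show "x \<in> span (T - S)" using that unfolding C_def .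
      show "p b = id b" if "b \<in> T - S" for b using that p(2) by simp
    qed
    then show ?thesis by simp
  qed
  have p0: "p x = 0" if "x \<in> span S" for x
  proof -
    have "p x = (\<lambda>_. 0) x"
    proof (rule P.linear_eq_on[OF p(1) P.linear_zero])
      show "x \<in> span S" using that .
      show "p b = (\<lambda>_. 0) b" if "b \<in> S" for b using that p(2) T(1) by auto
    qed
    then show ?thesis by simp
  qed
  have "C \<inter> B = {0}"
  proof
    show "C \<inter> B \<subseteq> {0}"
    proof
      fix x assume x: "x \<in> C \<inter> B"
      then have "x \<in> A \<inter> B" using CA by auto
      then have "x \<in> span S" using spanS by simp
      then have "p x = 0" by (rule p0)
      moreover have "p x = x" using x p1 by simp
      ultimately show "x \<in> {0}" by simp
    qed
    have "0 \<in> C" unfolding C_def by (rule span_zero)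
    moreover have "0 \<in> B" using B by (rule subspace_0)
    ultimately show "{0} \<subseteq> C \<inter> B" by simp
  qed
  moreover have "A \<subseteq> {c + b | c b. c \<in> C \<and> b \<in> A \<inter> B}"
  proof -
    have "T = (T - S) \<union> S" using T(1) by auto
    then have "span T = {x + y | x y. x \<in> span (T - S) \<and> y \<in> span S}"
      using span_Un[of "T - S" S] by simp
    then show ?thesis using T(4) unfolding spanS C_def by simp
  qed
  moreover have "subspace C" unfolding C_def by simp
  ultimately have "iscomp scale A B C" using CA unfolding iscomp_def by simp
  then show ?thesis by (rule exI)
qed

end

context vector_space_pair begin

lemma transport:
  assumes h: "Vector_Spaces.linear s1 s2 h" and C: "vs1.subspace C" and inj: "inj_on h C"
  shows "vs2.dim (h ` C) = vs1.dim C \<and> (fdim s2 (h ` C) \<longleftrightarrow> fdim s1 C)"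
proof -
  obtain S where S: "S \<subseteq> C" "vs1.independent S" "C \<subseteq> vs1.span S" "card S = vs1.dim C"
    by (rule vs1.basis_exists)
  have spS: "vs1.span S = C" by (rule vs1.span_subspace[OF S(1) S(3) C])
  have inj2: "inj_on h (vs1.span S)" using inj spS by simp
  have ind: "vs2.independent (h ` S)" by (rule linear_independent_injective_image[OF h S(2) inj2])
  have sp2: "vs2.span (h ` S) = h ` C" using linear_span_image[OF h, of S] spS by simp
  have sp2': "vs2.span (h ` S) = vs2.span (h ` C)" using sp2 vs2.span_span by metis
  have injS: "inj_on h S" using inj S(1) by (rule inj_on_subset)
  have d2: "vs2.dim (h ` C) = card (h ` S)" by (rule vs2.dim_eq_card[OF sp2' ind])
  have cS: "card (h ` S) = card S" using injS by (rule card_image)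
  have f1: "fdim s1 C \<longleftrightarrow> finite S"
  proof
    assume "fdim s1 C"
    then obtain T where T: "finite T" "C \<subseteq> vs1.span T" unfolding fdim_def by blast
    then show "finite S" using vs1.independent_span_bound[OF T(1) S(2)] S(1) by auto
  next
    assume "finite S" then show "fdim s1 C" unfolding fdim_def using S(3) by blast
  qed
  have f2: "fdim s2 (h ` C) \<longleftrightarrow> finite S"
  proof
    assume "fdim s2 (h ` C)"
    then obtain T where T: "finite T" "h ` C \<subseteq> vs2.span T" unfolding fdim_def by blast
    have "h ` S \<subseteq> vs2.span T" using T(2) S(1) by auto
    then have "finite (h ` S)" using vs2.independent_span_bound[OF T(1) ind] by simp
    then show "finite S" using injS finite_imageD by metis
  next
    assume "finite S" then show "fdim s2 (h ` C)" unfolding fdim_def using sp2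
      by (metis finite_imageI order_refl)
  qed
  show ?thesis using d2 cS S(4) f1 f2 by simp
qed

end

context vector_space begin

lemma comp_unique:
  assumes C: "iscomp scale A B C" and D: "iscomp scale A B D" and B: "subspace B"
  shows "dim C = dim D \<and> (fdim scale C \<longleftrightarrow> fdim scale D)"
proof -
  interpret P: vector_space_pair scale scale by unfold_locales
  have Cs: "subspace C" "C \<subseteq> A" "C \<inter> B = {0}" "A \<subseteq> {c + b | c b. c \<in> C \<and> b \<in> A \<inter> B}"
    using C unfolding iscomp_def by simp_all
  have Ds: "subspace D" "D \<subseteq> A" "D \<inter> B = {0}" "A \<subseteq> {c + b | c b. c \<in> D \<and> b \<in> A \<inter> B}"
    using D unfolding iscomp_def by simp_all
  obtain S where S: "S \<subseteq> C" "independent S" "C \<subseteq> span S" "card S = dim C"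
    by (rule basis_exists)
  have spS: "span S = C" by (rule span_subspace[OF S(1) S(3) Cs(1)])
  have ex: "\<exists>d. d \<in> D \<and> x - d \<in> B" if "x \<in> S" for x
  proof -
    have "x \<in> A" using that S(1) Cs(2) by auto
    then obtain d b where "x = d + b" "d \<in> D" "b \<in> A \<inter> B" using Ds(4) by blast
    then show ?thesis by (intro exI[of _ d]) simp
  qed
  define g where "g x = (SOME d. d \<in> D \<and> x - d \<in> B)" for x
  have g: "g x \<in> D \<and> x - g x \<in> B" if "x \<in> S" for x
    unfolding g_def using someI_ex[OF ex[OF that]] .
  from P.linear_independent_extend[OF S(2), where f=g]
  obtain G where G: "Vector_Spaces.linear scale scale G" "\<forall>x\<in>S. G x = g x" by blast
  define W where "W = {x. G x \<in> D} \<inter> {x. (\<lambda>x. x - G x) x \<in> B}"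
  have lin2: "Vector_Spaces.linear scale scale (\<lambda>x. x - G x)"
    by (rule P.linear_compose_sub[OF linear_ident G(1)])
  have "subspace W" unfolding W_def
    by (rule subspace_inter[OF P.linear_subspace_linear_preimage[OF G(1) Ds(1)]
          P.linear_subspace_linear_preimage[OF lin2 B]])
  moreover have "S \<subseteq> W" unfolding W_def using g G(2) by auto
  ultimately have "span S \<subseteq> W" by (intro span_minimal)
  then have CW: "C \<subseteq> W" using spS by simp
  have inj: "inj_on G C"
    unfolding P.linear_inj_on_iff_eq_0[OF G(1) Cs(1)]
  proof (intro ballI impI)
    fix x assume x: "x \<in> C" "G x = 0"
    then have "x \<in> B" using CW unfolding W_def by auto
    then show "x = 0" using x(1) Cs(3) by auto
  qed
  have img: "G ` C = D"
  proof
    show "G ` C \<subseteq> D" using CW unfolding W_def by auto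
    show "D \<subseteq> G ` C"
    proof
      fix d assume d: "d \<in> D"
      then have "d \<in> A" using Ds(2) by auto
      then obtain c b where cb: "d = c + b" "c \<in> C" "b \<in> A \<inter> B" using Cs(4) by blast
      have Gc: "G c \<in> D" "c - G c \<in> B" using CW cb(2) unfolding W_def by auto
      have e: "G c - d = - (c - G c) - b" using cb(1) by (simp add: algebra_simps)
      have "G c - d \<in> B" unfolding e
        using subspace_diff[OF B subspace_neg[OF B Gc(2)]] cb(3) by simp
      moreover have "G c - d \<in> D" using subspace_diff[OF Ds(1) Gc(1) d] .
      ultimately have "G c - d \<in> D \<inter> B" by simp
      then have "G c - d \<in> {0}" unfolding Ds(3) .
      then have "d = G c" by simp
      then show "d \<in> G ` C" using cb(2) by simp
    qed
  qed
  show ?thesis using P.transport[OF G(1) Cs(1) inj] unfolding img by simp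
qed

lemma comp_quot:
  assumes B: "subspace B" and C: "iscomp scale A B C"
  shows "quot_dim scale A B = dim C \<and> (qfd scale A B \<longleftrightarrow> fdim scale C)"
proof -
  have S: "iscomp scale A B (SOME C. iscomp scale A B C)" using someI[of "iscomp scale A B", OF C] .
  show ?thesis using comp_unique[OF S C B] unfolding quot_dim_alt qfd_def by simp
qed

end

context vector_space begin

lemma indep_union:
  assumes S1: "independent S1" and S2: "independent S2" and f1: "finite S1" and f2: "finite S2"
    and int: "span S1 \<inter> span S2 = {0}"
  shows "independent (S1 \<union> S2)" and "S1 \<inter> S2 = {}"
proof -
  show dis: "S1 \<inter> S2 = {}"
  proof (rule ccontr)
    assume "S1 \<inter> S2 \<noteq> {}"
    then obtain x where x: "x \<in> S1" "x \<in> S2" by blast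
    then have "x \<in> span S1 \<inter> span S2" using span_base by auto
    then have "x = 0" using int by auto
    then show False using x(1) S1 dependent_zero by auto
  qed
  show "independent (S1 \<union> S2)"
  proof
    assume dep: "dependent (S1 \<union> S2)"
    have fin: "finite (S1 \<union> S2)" using f1 f2 by simp
    from dep[unfolded dependent_finite[OF fin]]
    obtain u where u: "\<exists>v \<in> S1 \<union> S2. u v \<noteq> 0" "(\<Sum>v\<in>S1 \<union> S2. scale (u v) v) = 0"
      by blast
    define x1 where "x1 = (\<Sum>v\<in>S1. scale (u v) v)"
    define x2 where "x2 = (\<Sum>v\<in>S2. scale (u v) v)"
    have "x1 + x2 = 0" using u(2) unfolding x1_def x2_def
      using sum.union_disjoint[OF f1 f2 dis, of "\<lambda>v. scale (u v) v"] by simp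
    then have e: "x1 = - x2" by (simp add: eq_neg_iff_add_eq_0)
    have "x1 \<in> span S1" unfolding x1_def by (intro span_sum span_scale span_base)
    moreover have "x1 \<in> span S2" unfolding e x2_def by (intro span_neg span_sum span_scale span_base)
    ultimately have x10: "x1 = 0" using int by auto
    then have x20: "x2 = 0" using e by simp
    have a1: "\<forall>v\<in>S1. u v = 0"
    proof (rule ccontr)
      assume "\<not> (\<forall>v\<in>S1. u v = 0)"
      then obtain v where "v \<in> S1" "u v \<noteq> 0" by blast
      then have "dependent S1" unfolding dependent_finite[OF f1]
        using x10 unfolding x1_def by (intro exI[of _ u] conjI bexI)
      then show False using S1 by simp
    qed
    have a2: "\<forall>v\<in>S2. u v = 0"
    proof (rule ccontr)
      assume "\<not> (\<forall>v\<in>S2. u v = 0)"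
      then obtain v where "v \<in> S2" "u v \<noteq> 0" by blast
      then have "dependent S2" unfolding dependent_finite[OF f2]
        using x20 unfolding x2_def by (intro exI[of _ u] conjI bexI)
      then show False using S2 by simp
    qed
    show False using u(1) a1 a2 by blast
  qed
qed

lemma fdim_basis:
  assumes "fdim scale X" "S \<subseteq> X" "independent S"
  shows "finite S"
proof -
  obtain T where T: "finite T" "X \<subseteq> span T" using assms(1) unfolding fdim_def by blast
  show ?thesis using independent_span_bound[OF T(1) assms(3)] assms(2) T(2) by auto
qed

end

context vector_space begin

lemma quot_add:
  assumes A: "subspace A" and B: "subspace B" and C: "subspace C"
    and CB: "C \<subseteq> B" and BA: "B \<subseteq> A" and q1: "qfd scale A B" and q2: "qfd scale B C"
  shows "quot_dim scale A C = quot_dim scale A B + quot_dim scale B C"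
proof -
  obtain D2 where D2: "iscomp scale A B D2" using comp_exists[OF A B] by blast
  obtain D1 where D1: "iscomp scale B C D1" using comp_exists[OF B C] by blast
  have e2: "quot_dim scale A B = dim D2" "fdim scale D2" using comp_quot[OF B D2] q1 by auto
  have e1: "quot_dim scale B C = dim D1" "fdim scale D1" using comp_quot[OF C D1] q2 by auto
  have D1s: "subspace D1" "D1 \<subseteq> B" "D1 \<inter> C = {0}" "B \<subseteq> {c + b | c b. c \<in> D1 \<and> b \<in> B \<inter> C}"
    using D1 unfolding iscomp_def by simp_all
  have D2s: "subspace D2" "D2 \<subseteq> A" "D2 \<inter> B = {0}" "A \<subseteq> {c + b | c b. c \<in> D2 \<and> b \<in> A \<inter> B}"
    using D2 unfolding iscomp_def by simp_all
  define D where "D = {x + y | x y. x \<in> D1 \<and> y \<in> D2}"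
  have Dsub: "subspace D" unfolding D_def by (rule subspace_sums[OF D1s(1) D2s(1)])
  have DA: "D \<subseteq> A"
  proof
    fix z assume "z \<in> D"
    then obtain x y where "z = x + y" "x \<in> D1" "y \<in> D2" unfolding D_def by blast
    moreover have "x \<in> A" "y \<in> A" using \<open>x \<in> D1\<close> \<open>y \<in> D2\<close> D1s(2) D2s(2) BA by auto
    ultimately show "z \<in> A" using subspace_add[OF A] by simp
  qed
  have DC: "D \<inter> C = {0}"
  proof
    show "D \<inter> C \<subseteq> {0}"
    proof
      fix z assume z: "z \<in> D \<inter> C"
      then obtain x y where xy: "z = x + y" "x \<in> D1" "y \<in> D2" unfolding D_def by blast
      have "y = z - x" using xy(1) by simp
      moreover have "z \<in> B" "x \<in> B" using z CB xy(2) D1s(2) by auto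
      ultimately have "y \<in> B" using subspace_diff[OF B] by simp
      then have y0: "y = 0" using xy(3) D2s(3) by auto
      then have "x \<in> C" using z xy(1) by simp
      then have "x = 0" using xy(2) D1s(3) by auto
      then show "z \<in> {0}" using y0 xy(1) by simp
    qed
    show "{0} \<subseteq> D \<inter> C" using subspace_0[OF Dsub] subspace_0[OF C] by simp
  qed
  have AD: "A \<subseteq> {c + b | c b. c \<in> D \<and> b \<in> A \<inter> C}"
  proof
    fix a assume a: "a \<in> A"
    then obtain d2 b where db: "a = d2 + b" "d2 \<in> D2" "b \<in> A \<inter> B" using D2s(4) by blast
    then obtain d1 c where dc: "b = d1 + c" "d1 \<in> D1" "c \<in> B \<inter> C" using D1s(4) by blast
    have "d1 + d2 \<in> D" unfolding D_def using dc(2) db(2) by blast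
    moreover have "a = (d1 + d2) + c" using db(1) dc(1) by (simp add: algebra_simps)
    moreover have "c \<in> A \<inter> C" using dc(3) BA by auto
    ultimately show "a \<in> {c + b | c b. c \<in> D \<and> b \<in> A \<inter> C}" by blast
  qed
  have DD: "iscomp scale A C D" unfolding iscomp_def using Dsub DA DC AD by simp
  have eD: "quot_dim scale A C = dim D" using comp_quot[OF C DD] by simp
  obtain S1 where S1: "S1 \<subseteq> D1" "independent S1" "D1 \<subseteq> span S1" "card S1 = dim D1"
    by (rule basis_exists)
  obtain S2 where S2: "S2 \<subseteq> D2" "independent S2" "D2 \<subseteq> span S2" "card S2 = dim D2"
    by (rule basis_exists)
  have sp1: "span S1 = D1" by (rule span_subspace[OF S1(1) S1(3) D1s(1)])
  have sp2: "span S2 = D2" by (rule span_subspace[OF S2(1) S2(3) D2s(1)])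
  have f1: "finite S1" by (rule fdim_basis[OF e1(2) S1(1) S1(2)])
  have f2: "finite S2" by (rule fdim_basis[OF e2(2) S2(1) S2(2)])
  have int: "span S1 \<inter> span S2 = {0}" unfolding sp1 sp2
    using D1s(2) D2s(3) subspace_0[OF D1s(1)] subspace_0[OF D2s(1)] by auto
  have ind: "independent (S1 \<union> S2)" and dis: "S1 \<inter> S2 = {}"
    using indep_union[OF S1(2) S2(2) f1 f2 int] by auto
  have spD: "span (S1 \<union> S2) = D" unfolding span_Un sp1 sp2 D_def ..
  have sD: "span D = D" using span_eq_iff[THEN iffD2, OF Dsub] .
  have "span (S1 \<union> S2) = span D" unfolding sD by (rule spD)
  then have "dim D = card (S1 \<union> S2)" using dim_eq_card ind by blast
  also have "\<dots> = card S1 + card S2" using card_Un_disjoint[OF f1 f2 dis] .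
  finally show ?thesis using eD e1(1) e2(1) S1(4) S2(4) by simp
qed

end

lemma sumsetI: "a = c + b \<Longrightarrow> c \<in> C \<Longrightarrow> b \<in> B \<Longrightarrow> a \<in> {c + b | c b. c \<in> C \<and> b \<in> B}"
  by blast

lemma sumsetE: "a \<in> {c + b | c b. c \<in> C \<and> b \<in> B} \<Longrightarrow> (\<And>c b. a = c + b \<Longrightarrow> c \<in> C \<Longrightarrow> b \<in> B \<Longrightarrow> P) \<Longrightarrow> P"
  by blast

context vector_space begin

lemma quot_sub:
  assumes A0: "subspace A0" and B0: "subspace B0" and A: "subspace A" and B: "subspace B"
    and h1: "B0 \<subseteq> B" and h2: "B \<subseteq> A" and h3: "A \<subseteq> A0" and q: "qfd scale A0 B0"
  shows "qfd scale A B"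
proof -
  obtain C where C: "iscomp scale A B C" using comp_exists[OF A B] by blast
  have Cs: "subspace C" "C \<subseteq> A" "C \<inter> B = {0}" "A \<subseteq> {c + b | c b. c \<in> C \<and> b \<in> A \<inter> B}"
    using C unfolding iscomp_def by simp_all
  define CB where "CB = {x + y | x y. x \<in> C \<and> y \<in> B0}"
  have CBs: "subspace CB" unfolding CB_def by (rule subspace_sums[OF Cs(1) B0])
  obtain E where E: "iscomp scale A0 CB E" using comp_exists[OF A0 CBs] by blast
  have Es: "subspace E" "E \<subseteq> A0" "E \<inter> CB = {0}" "A0 \<subseteq> {c + b | c b. c \<in> E \<and> b \<in> A0 \<inter> CB}"
    using E unfolding iscomp_def by simp_all
  define D where "D = {x + y | x y. x \<in> C \<and> y \<in> E}"
  have Ds: "subspace D" unfolding D_def by (rule subspace_sums[OF Cs(1) Es(1)])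
  have DA: "D \<subseteq> A0"
  proof
    fix z assume "z \<in> D"
    then obtain x y where xy: "z = x + y" "x \<in> C" "y \<in> E" unfolding D_def by (rule sumsetE)
    have "C \<subseteq> A0" using Cs(2) h3 by (rule order_trans)
    then have "x \<in> A0" using xy(2) by (rule subsetD)
    moreover have "y \<in> A0" using xy(3) Es(2) by (rule subsetD[rotated])
    ultimately show "z \<in> A0" using subspace_add[OF A0] xy(1) by simp
  qed
  have DB: "D \<inter> B0 = {0}"
  proof
    show "D \<inter> B0 \<subseteq> {0}"
    proof
      fix z assume z: "z \<in> D \<inter> B0"
      then have zD: "z \<in> D" and zB: "z \<in> B0" by simp_all
      from zD obtain x y where xy: "z = x + y" "x \<in> C" "y \<in> E" unfolding D_def by (rule sumsetE)
      have "y = (- x) + z" using xy(1) by (simp add: algebra_simps)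
      moreover have "- x \<in> C" using subspace_neg[OF Cs(1) xy(2)] .
      ultimately have "y \<in> CB" unfolding CB_def using zB by (rule sumsetI)
      then have "y \<in> E \<inter> CB" using xy(3) by simp
      then have y0: "y = 0" unfolding Es(3) by simp
      then have "x = z" using xy(1) by simp
      then have "x \<in> B" using zB h1 by (simp add: subsetD)
      then have "x \<in> C \<inter> B" using xy(2) by simp
      then have "x = 0" unfolding Cs(3) by simp
      then show "z \<in> {0}" using y0 xy(1) by simp
    qed
    show "{0} \<subseteq> D \<inter> B0" using subspace_0[OF Ds] subspace_0[OF B0] by simp
  qed
  have AD: "A0 \<subseteq> {c + b | c b. c \<in> D \<and> b \<in> A0 \<inter> B0}"
  proof
    fix a assume "a \<in> A0"
    then have "a \<in> {c + b | c b. c \<in> E \<and> b \<in> A0 \<inter> CB}" using Es(4) by (rule subsetD[rotated])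
    then obtain e k where ek: "a = e + k" "e \<in> E" "k \<in> A0 \<inter> CB" by (rule sumsetE)
    then have "k \<in> CB" by simp
    then obtain c b where cb: "k = c + b" "c \<in> C" "b \<in> B0" unfolding CB_def by (rule sumsetE)
    have "c + e \<in> D" unfolding D_def using refl cb(2) ek(2) by (rule sumsetI)
    moreover have "a = (c + e) + b" using ek(1) cb(1) by (simp add: algebra_simps)
    moreover have "b \<in> A0" using cb(3) h1 h2 h3 by blast
    ultimately show "a \<in> {c + b | c b. c \<in> D \<and> b \<in> A0 \<inter> B0}" using cb(3)
      by (intro sumsetI) simp_all
  qed
  have DD: "iscomp scale A0 B0 D" unfolding iscomp_def using Ds DA DB AD by simp
  have "fdim scale D" using comp_quot[OF B0 DD] q by simp
  then obtain T where T: "finite T" "D \<subseteq> span T" unfolding fdim_def by blast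
  have "C \<subseteq> D"
  proof
    fix c assume c: "c \<in> C"
    have "0 \<in> E" using subspace_0[OF Es(1)] .
    then show "c \<in> D" unfolding D_def using c by (intro sumsetI[of c c 0]) simp_all
  qed
  then have "C \<subseteq> span T" using T(2) by (rule order_trans)
  then have "fdim scale C" unfolding fdim_def using T(1) by blast
  then show ?thesis using comp_quot[OF B C] by simp
qed

end

context vector_space begin

lemma quot_fin:
  assumes A: "subspace A" and B: "subspace B" and fS: "finite S" and SA: "span S \<subseteq> A"
    and cov: "A \<subseteq> {x + y | x y. x \<in> span S \<and> y \<in> B}"
  shows "qfd scale A B"
proof -
  have SB: "subspace (span S \<inter> B)" using subspace_inter[OF subspace_span B] .
  obtain C where C: "iscomp scale (span S) (span S \<inter> B) C"
    using comp_exists[OF subspace_span SB] by blast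
  have Cs: "subspace C" "C \<subseteq> span S" "C \<inter> (span S \<inter> B) = {0}"
      "span S \<subseteq> {c + b | c b. c \<in> C \<and> b \<in> span S \<inter> (span S \<inter> B)}"
    using C unfolding iscomp_def by simp_all
  have CA: "C \<subseteq> A" using Cs(2) SA by simp
  have CB: "C \<inter> B = {0}"
  proof -
    have "C \<inter> B = C \<inter> (span S \<inter> B)" using Cs(2) by blast
    then show ?thesis using Cs(3) by simp
  qed
  have AC: "A \<subseteq> {c + b | c b. c \<in> C \<and> b \<in> A \<inter> B}"
  proof
    fix a assume aA: "a \<in> A"
    then have "a \<in> {x + y | x y. x \<in> span S \<and> y \<in> B}" using cov by (rule subsetD[rotated])
    then obtain x y where xy: "a = x + y" "x \<in> span S" "y \<in> B" by (rule sumsetE)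
    from xy(2) have "x \<in> {c + b | c b. c \<in> C \<and> b \<in> span S \<inter> (span S \<inter> B)}" using Cs(4) by (rule subsetD[rotated])
    then obtain c b where cb: "x = c + b" "c \<in> C" "b \<in> span S \<inter> (span S \<inter> B)" by (rule sumsetE)
    have byB: "b + y \<in> B" using subspace_add[OF B] cb(3) xy(3) by simp
    have e1: "b + y = a - c" using xy(1) cb(1) by (simp add: algebra_simps)
    have cA: "c \<in> A" using cb(2) CA by (rule subsetD[rotated])
    have "a - c \<in> A" using subspace_diff[OF A aA cA] .
    then have byA: "b + y \<in> A" unfolding e1 .
    have e2: "a = c + (b + y)" using xy(1) cb(1) by (simp add: algebra_simps)
    have byAB: "b + y \<in> A \<inter> B" using byA byB by simp
    show "a \<in> {c + b | c b. c \<in> C \<and> b \<in> A \<inter> B}" by (rule sumsetI[OF e2 cb(2) byAB])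
  qed
  have CC: "iscomp scale A B C" unfolding iscomp_def using Cs(1) CA CB AC by simp
  have "fdim scale C" unfolding fdim_def using fS Cs(2) by blast
  then show ?thesis using comp_quot[OF B CC] by simp
qed

end

context vector_space_pair begin

lemma quot_iso:
  assumes h: "Vector_Spaces.linear s1 s2 h" and A: "vs1.subspace A" and A': "vs2.subspace A'"
    and B': "vs2.subspace B'" and BA: "B' \<subseteq> A'" and hA: "h ` A \<subseteq> A'"
    and cov: "A' \<subseteq> {x + y | x y. x \<in> h ` A \<and> y \<in> B'}"
  shows "quot_dim s2 A' B' = quot_dim s1 A {a\<in>A. h a \<in> B'} \<and>
         (qfd s2 A' B' \<longleftrightarrow> qfd s1 A {a\<in>A. h a \<in> B'})"
proof -
  let ?K = "{a\<in>A. h a \<in> B'}"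
  have Keq: "?K = A \<inter> {a. h a \<in> B'}" by auto
  have K: "vs1.subspace ?K" unfolding Keq
    by (rule vs1.subspace_inter[OF A linear_subspace_linear_preimage[OF h B']])
  obtain C where C: "iscomp s1 A ?K C" using vs1.comp_exists[OF A K] by blast
  have Cs: "vs1.subspace C" "C \<subseteq> A" "C \<inter> ?K = {0}" "A \<subseteq> {c + b | c b. c \<in> C \<and> b \<in> A \<inter> ?K}"
    using C unfolding iscomp_def by simp_all
  have h0: "h 0 = 0" by (rule linear_0[OF h])
  have inj: "inj_on h C"
    unfolding linear_inj_on_iff_eq_0[OF h Cs(1)]
  proof (intro ballI impI)
    fix x assume x: "x \<in> C" "h x = 0"
    have "x \<in> ?K" using x Cs(2) vs2.subspace_0[OF B'] by auto
    then have "x \<in> C \<inter> ?K" using x(1) by simp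
    then show "x = 0" unfolding Cs(3) by simp
  qed
  have hCs: "vs2.subspace (h ` C)" by (rule linear_subspace_image[OF h Cs(1)])
  have hCA: "h ` C \<subseteq> A'" using hA Cs(2) by auto
  have hCB: "h ` C \<inter> B' = {0}"
  proof
    show "h ` C \<inter> B' \<subseteq> {0}"
    proof
      fix y assume y: "y \<in> h ` C \<inter> B'"
      then obtain c where c: "y = h c" "c \<in> C" by auto
      then have "c \<in> C \<inter> ?K" using y Cs(2) by auto
      then have "c = 0" unfolding Cs(3) by simp
      then show "y \<in> {0}" using c h0 by simp
    qed
    have "0 \<in> h ` C" using h0 vs1.subspace_0[OF Cs(1)] by (metis image_eqI)
    then show "{0} \<subseteq> h ` C \<inter> B'" using vs2.subspace_0[OF B'] by simp
  qed
  have hcov: "A' \<subseteq> {c + b | c b. c \<in> h ` C \<and> b \<in> A' \<inter> B'}"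
  proof
    fix y assume "y \<in> A'"
    then obtain x b where xb: "y = x + b" "x \<in> h ` A" "b \<in> B'" using cov by blast
    then obtain a where a: "x = h a" "a \<in> A" by auto
    then obtain c k where ck: "a = c + k" "c \<in> C" "k \<in> A \<inter> ?K" using Cs(4) by blast
    have "h k + b \<in> B'" using vs2.subspace_add[OF B'] ck(3) xb(3) by simp
    then have "h k + b \<in> A' \<inter> B'" using BA by auto
    moreover have "y = h c + (h k + b)" using xb(1) a(1) ck(1) linear_add[OF h] by (simp add: algebra_simps)
    moreover have "h c \<in> h ` C" using ck(2) by simp
    ultimately show "y \<in> {c + b | c b. c \<in> h ` C \<and> b \<in> A' \<inter> B'}" by blast
  qed
  have hC: "iscomp s2 A' B' (h ` C)" unfolding iscomp_def using hCs hCA hCB hcov by simp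
  have e2: "quot_dim s2 A' B' = vs2.dim (h ` C) \<and> (qfd s2 A' B' \<longleftrightarrow> fdim s2 (h ` C))"
    by (rule vs2.comp_quot[OF B' hC])
  have e1: "quot_dim s1 A ?K = vs1.dim C \<and> (qfd s1 A ?K \<longleftrightarrow> fdim s1 C)"
    by (rule vs1.comp_quot[OF K C])
  show ?thesis using e1 e2 transport[OF h Cs(1) inj] by simp
qed

end

lemma la_vs: "leibniz_algebra sc br \<Longrightarrow> vector_space sc"
  unfolding leibniz_algebra_def by simp

lemma la_linl: "leibniz_algebra sc br \<Longrightarrow> Vector_Spaces.linear sc sc (\<lambda>x. br x y)"
  unfolding Vector_Spaces.linear_iff leibniz_algebra_def by simp

lemma la_linr: "leibniz_algebra sc br \<Longrightarrow> Vector_Spaces.linear sc sc (\<lambda>y. br x y)"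
  unfolding Vector_Spaces.linear_iff leibniz_algebra_def by simp

lemma la_addl: "leibniz_algebra sc br \<Longrightarrow> br (x + y) z = br x z + br y z"
  unfolding leibniz_algebra_def by simp

lemma la_addr: "leibniz_algebra sc br \<Longrightarrow> br x (y + z) = br x y + br x z"
  unfolding leibniz_algebra_def by simp

lemma la_zerol: assumes "leibniz_algebra sc br" shows "br 0 y = 0"
proof -
  have "br 0 y = br (0 + 0) y" by simp
  also have "\<dots> = br 0 y + br 0 y" using la_addl[OF assms] .
  finally show ?thesis by simp
qed

lemma la_zeror: assumes "leibniz_algebra sc br" shows "br y 0 = 0"
proof -
  have "br y 0 = br y (0 + 0)" by simp
  also have "\<dots> = br y 0 + br y 0" using la_addr[OF assms] .
  finally show ?thesis by simp
qed

lemma la_linsym: assumes "leibniz_algebra sc br"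
  shows "Vector_Spaces.linear sc sc (\<lambda>x. br x y + br y x)"
proof -
  interpret V: vector_space sc using la_vs[OF assms] .
  interpret P: vector_space_pair sc sc by unfold_locales
  show ?thesis by (rule P.linear_compose_add[OF la_linl[OF assms] la_linr[OF assms]])
qed

lemma la_linsym2: assumes "leibniz_algebra sc br"
  shows "Vector_Spaces.linear sc sc (\<lambda>y. br x y + br y x)"
proof -
  interpret V: vector_space sc using la_vs[OF assms] .
  interpret P: vector_space_pair sc sc by unfold_locales
  show ?thesis by (rule P.linear_compose_add[OF la_linr[OF assms] la_linl[OF assms]])
qed

lemma lc_gen: "br m n + br n m \<in> lie_comm sc br M N" if "m \<in> M" "n \<in> N" "vector_space sc"
proof -
  interpret V: vector_space sc by fact
  have "br m n + br n m \<in> {br m n + br n m | m n. m \<in> M \<and> n \<in> N}" using that by blast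
  then show ?thesis unfolding lie_comm_def by (rule V.span_base)
qed

lemma lc_subspace: assumes "vector_space sc" shows "module.subspace sc (lie_comm sc br M N)"
proof -
  interpret V: vector_space sc by fact
  show ?thesis unfolding lie_comm_def by simp
qed

lemma lc_mono: assumes "vector_space sc" "M \<subseteq> M'" "N \<subseteq> N'"
  shows "lie_comm sc br M N \<subseteq> lie_comm sc br M' N'"
proof -
  interpret V: vector_space sc by fact
  have "{br m n + br n m | m n. m \<in> M \<and> n \<in> N} \<subseteq> {br m n + br n m | m n. m \<in> M' \<and> n \<in> N'}"
    using assms(2,3) by blast
  then show ?thesis unfolding lie_comm_def by (rule V.span_mono)
qed

lemma lc_ideal: assumes la: "leibniz_algebra sc br" and I: "module.subspace sc I"
    and cl: "\<forall>x\<in>I. \<forall>y. br x y \<in> I \<and> br y x \<in> I"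
  shows "lie_comm sc br UNIV I \<subseteq> I"
proof -
  interpret V: vector_space sc using la_vs[OF la] .
  have "{br m n + br n m | m n. m \<in> UNIV \<and> n \<in> I} \<subseteq> I"
  proof
    fix z assume "z \<in> {br m n + br n m | m n. m \<in> UNIV \<and> n \<in> I}"
    then obtain m n where z: "z = br m n + br n m" "n \<in> I" by blast
    then show "z \<in> I" using V.subspace_add[OF I] cl by simp
  qed
  then show ?thesis unfolding lie_comm_def using I by (rule V.span_minimal)
qed

lemma lc_sum: assumes la: "leibniz_algebra sc br"
    and T: "T \<subseteq> {x + y | x y. x \<in> P \<and> y \<in> Q}"
  shows "lie_comm sc br UNIV T \<subseteq> {a + b | a b. a \<in> lie_comm sc br UNIV P \<and> b \<in> lie_comm sc br UNIV Q}"
proof -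
  have vs: "vector_space sc" using la_vs[OF la] .
  interpret V: vector_space sc using vs .
  have W: "V.subspace {a + b | a b. a \<in> lie_comm sc br UNIV P \<and> b \<in> lie_comm sc br UNIV Q}"
    by (rule V.subspace_sums[OF lc_subspace[OF vs] lc_subspace[OF vs]])
  have "{br m n + br n m | m n. m \<in> UNIV \<and> n \<in> T} \<subseteq>
        {a + b | a b. a \<in> lie_comm sc br UNIV P \<and> b \<in> lie_comm sc br UNIV Q}"
  proof
    fix z assume "z \<in> {br m n + br n m | m n. m \<in> UNIV \<and> n \<in> T}"
    then obtain m t where z: "z = br m t + br t m" "t \<in> T" by blast
    from T z(2) have "t \<in> {x + y | x y. x \<in> P \<and> y \<in> Q}" by (rule subsetD)
    then obtain x y where xy: "t = x + y" "x \<in> P" "y \<in> Q" by (rule sumsetE)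
    have e: "z = (br m x + br x m) + (br m y + br y m)"
      unfolding z(1) xy(1) la_addl[OF la] la_addr[OF la] by (simp add: algebra_simps)
    have 1: "br m x + br x m \<in> lie_comm sc br UNIV P" using lc_gen[OF _ xy(2) vs] by simp
    have 2: "br m y + br y m \<in> lie_comm sc br UNIV Q" using lc_gen[OF _ xy(3) vs] by simp
    show "z \<in> {a + b | a b. a \<in> lie_comm sc br UNIV P \<and> b \<in> lie_comm sc br UNIV Q}"
      by (rule sumsetI[OF e 1 2])
  qed
  then show ?thesis unfolding lie_comm_def[of sc br UNIV T] using W by (rule V.span_minimal)
qed

lemma lc_image:
  assumes l1: "leibniz_algebra sc1 br1" and l2: "leibniz_algebra sc2 br2"
    and hom: "leibniz_hom sc1 br1 sc2 br2 \<rho>"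
  shows "\<rho> ` lie_comm sc1 br1 M N = lie_comm sc2 br2 (\<rho> ` M) (\<rho> ` N)"
proof -
  interpret V1: vector_space sc1 using la_vs[OF l1] .
  interpret V2: vector_space sc2 using la_vs[OF l2] .
  interpret P: vector_space_pair sc1 sc2 by unfold_locales
  have lin: "Vector_Spaces.linear sc1 sc2 \<rho>" and br: "\<And>x y. \<rho> (br1 x y) = br2 (\<rho> x) (\<rho> y)"
    using hom unfolding leibniz_hom_def by auto
  have key: "\<And>m n. \<rho> (br1 m n + br1 n m) = br2 (\<rho> m) (\<rho> n) + br2 (\<rho> n) (\<rho> m)"
    using P.linear_add[OF lin] br by simp
  have G: "\<rho> ` {br1 m n + br1 n m | m n. m \<in> M \<and> n \<in> N} =
           {br2 m n + br2 n m | m n. m \<in> \<rho> ` M \<and> n \<in> \<rho> ` N}"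
  proof
    show "\<rho> ` {br1 m n + br1 n m | m n. m \<in> M \<and> n \<in> N} \<subseteq>
           {br2 m n + br2 n m | m n. m \<in> \<rho> ` M \<and> n \<in> \<rho> ` N}"
    proof
      fix z assume "z \<in> \<rho> ` {br1 m n + br1 n m | m n. m \<in> M \<and> n \<in> N}"
      then obtain m n where mn: "z = \<rho> (br1 m n + br1 n m)" "m \<in> M" "n \<in> N" by blast
      have "z = br2 (\<rho> m) (\<rho> n) + br2 (\<rho> n) (\<rho> m)" using mn(1) key by simp
      moreover have "\<rho> m \<in> \<rho> ` M" "\<rho> n \<in> \<rho> ` N" using mn(2,3) by simp_all
      ultimately show "z \<in> {br2 m n + br2 n m | m n. m \<in> \<rho> ` M \<and> n \<in> \<rho> ` N}" by blast
    qed
    show "{br2 m n + br2 n m | m n. m \<in> \<rho> ` M \<and> n \<in> \<rho> ` N} \<subseteq>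
        \<rho> ` {br1 m n + br1 n m | m n. m \<in> M \<and> n \<in> N}"
    proof
      fix z assume "z \<in> {br2 m n + br2 n m | m n. m \<in> \<rho> ` M \<and> n \<in> \<rho> ` N}"
      then obtain m' n' where mn: "z = br2 m' n' + br2 n' m'" "m' \<in> \<rho> ` M" "n' \<in> \<rho> ` N" by blast
      then obtain m n where "m' = \<rho> m" "n' = \<rho> n" "m \<in> M" "n \<in> N" by blast
      then have "z = \<rho> (br1 m n + br1 n m)" "br1 m n + br1 n m \<in> {br1 m n + br1 n m | m n. m \<in> M \<and> n \<in> N}"
        using mn(1) key by auto
      then show "z \<in> \<rho> ` {br1 m n + br1 n m | m n. m \<in> M \<and> n \<in> N}" by (rule image_eqI)
    qed
  qed
  show ?thesis unfolding lie_comm_def G[symmetric] using P.linear_span_image[OF lin] by simp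
qed

lemma bilin_span:
  assumes la: "leibniz_algebra sc br" and a: "a \<in> module.span sc L" and b: "b \<in> module.span sc L"
  shows "br a b + br b a \<in> module.span sc ((\<lambda>p. br (fst p) (snd p) + br (snd p) (fst p)) ` (L \<times> L))"
proof -
  interpret V: vector_space sc using la_vs[OF la] .
  interpret P: vector_space_pair sc sc by unfold_locales
  let ?S = "(\<lambda>p. br (fst p) (snd p) + br (snd p) (fst p)) ` (L \<times> L)"
  have step1: "br x y + br y x \<in> V.span ?S" if x: "x \<in> V.span L" and y: "y \<in> L" for x y
  proof -
    have sub: "V.subspace {x. (\<lambda>x. br x y + br y x) x \<in> V.span ?S}"
      by (rule P.linear_subspace_linear_preimage[OF la_linsym[OF la] V.subspace_span])
    have "L \<subseteq> {x. (\<lambda>x. br x y + br y x) x \<in> V.span ?S}"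
    proof
      fix x assume "x \<in> L"
      then have "(x, y) \<in> L \<times> L" using y by simp
      then have "br x y + br y x \<in> ?S" by force
      then show "x \<in> {x. (\<lambda>x. br x y + br y x) x \<in> V.span ?S}" by (simp add: V.span_base)
    qed
    then have "V.span L \<subseteq> {x. (\<lambda>x. br x y + br y x) x \<in> V.span ?S}" using sub by (rule V.span_minimal)
    then show ?thesis using x by auto
  qed
  have sub2: "V.subspace {y. (\<lambda>y. br a y + br y a) y \<in> V.span ?S}"
    by (rule P.linear_subspace_linear_preimage[OF la_linsym2[OF la] V.subspace_span])
  have "L \<subseteq> {y. (\<lambda>y. br a y + br y a) y \<in> V.span ?S}"
  proof
    fix y assume "y \<in> L"
    then show "y \<in> {y. (\<lambda>y. br a y + br y a) y \<in> V.span ?S}" using step1[OF a] by simp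
  qed
  then have "V.span L \<subseteq> {y. (\<lambda>y. br a y + br y a) y \<in> V.span ?S}" using sub2 by (rule V.span_minimal)
  then show ?thesis using b by auto
qed

theorem mainTheorem8:
  fixes scf :: "'k::field \<Rightarrow> 'f::ab_group_add \<Rightarrow> 'f" and brf :: "'f \<Rightarrow> 'f \<Rightarrow> 'f"
    and scg :: "'k \<Rightarrow> 'g::ab_group_add \<Rightarrow> 'g" and brg :: "'g \<Rightarrow> 'g \<Rightarrow> 'g"
    and \<rho> :: "'f \<Rightarrow> 'g" and n :: "'g set" and s :: "'f set"
  assumes char: "(2::'k) \<noteq> 0"
    and g: "leibniz_algebra scg brg" and gfin: "fin_dim scg"
    and f: "free_leibniz scf brf"
    and hom: "leibniz_hom scf brf scg brg \<rho>" and onto: "surj \<rho>"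
    and n: "two_sided_ideal scg brg n"
    and s: "two_sided_ideal scf brf s" and sn: "\<rho> ` s = n"
  shows "schur_lie_dim scf brf (\<rho> -` n)
           + quot_dim scf (\<rho> -` {0} \<inter> lie_comm scf brf UNIV s)
               (lie_comm scf brf UNIV (\<rho> -` {0}) \<inter> lie_comm scf brf UNIV s)
         = schur_lie_dim scf brf (\<rho> -` {0})
           + quot_dim scg (n \<inter> lie_comm scg brg UNIV UNIV) (lie_comm scg brg UNIV n)"
proof -
  have lf: "leibniz_algebra scf brf" using f unfolding free_leibniz_def free_leibniz_on_def by auto
  have vf: "vector_space scf" by (rule la_vs[OF lf])
  have vg: "vector_space scg" by (rule la_vs[OF g])
  interpret F: vector_space scf by (rule vf)
  interpret G: vector_space scg by (rule vg)
  interpret P: vector_space_pair scf scg by unfold_locales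
  interpret FF: vector_space_pair scf scf by unfold_locales
  have rl: "Vector_Spaces.linear scf scg \<rho>" and rb: "\<And>x y. \<rho> (brf x y) = brg (\<rho> x) (\<rho> y)"
    using hom unfolding leibniz_hom_def by auto
  have r0: "\<rho> 0 = 0" by (rule P.linear_0[OF rl])
  have radd: "\<And>x y. \<rho> (x + y) = \<rho> x + \<rho> y" by (rule P.linear_add[OF rl])
  have rdiff: "\<And>x y. \<rho> (x - y) = \<rho> x - \<rho> y" by (rule P.linear_diff[OF rl])
  have ns: "G.subspace n" and ncl: "\<forall>x\<in>n. \<forall>y. brg x y \<in> n \<and> brg y x \<in> n"
    using n unfolding two_sided_ideal_def by auto
  have ss: "F.subspace s" using s unfolding two_sided_ideal_def by auto

  define R where "R = \<rho> -` {0}"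
  define T where "T = \<rho> -` n"
  define F' where "F' = lie_comm scf brf UNIV UNIV"
  define LR where "LR = lie_comm scf brf UNIV R"
  define LS where "LS = lie_comm scf brf UNIV s"
  define LT where "LT = lie_comm scf brf UNIV T"
  define gg where "gg = lie_comm scg brg UNIV UNIV"
  define gn where "gn = lie_comm scg brg UNIV n"
  define Pp where "Pp = T \<inter> F'"
  define Q where "Q = R \<inter> F'"
  define K where "K = {x + y | x y. x \<in> Q \<and> y \<in> LT}"
  define M where "M = R \<inter> LT"

  have Rs: "F.subspace R" unfolding R_def by (rule P.linear_subspace_vimage[OF rl G.subspace_single_0])
  have Ts: "F.subspace T" unfolding T_def by (rule P.linear_subspace_vimage[OF rl ns])
  have F's: "F.subspace F'" unfolding F'_def by (rule lc_subspace[OF vf])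
  have LRs: "F.subspace LR" unfolding LR_def by (rule lc_subspace[OF vf])
  have LSs: "F.subspace LS" unfolding LS_def by (rule lc_subspace[OF vf])
  have LTs: "F.subspace LT" unfolding LT_def by (rule lc_subspace[OF vf])
  have ggs: "G.subspace gg" unfolding gg_def by (rule lc_subspace[OF vg])
  have gns: "G.subspace gn" unfolding gn_def by (rule lc_subspace[OF vg])
  have Pps: "F.subspace Pp" unfolding Pp_def by (rule F.subspace_inter[OF Ts F's])
  have Qs: "F.subspace Q" unfolding Q_def by (rule F.subspace_inter[OF Rs F's])
  have Ks: "F.subspace K" unfolding K_def by (rule F.subspace_sums[OF Qs LTs])
  have Ms: "F.subspace M" unfolding M_def by (rule F.subspace_inter[OF Rs LTs])
  have RLSs: "F.subspace (R \<inter> LS)" by (rule F.subspace_inter[OF Rs LSs])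

  have n0: "0 \<in> n" by (rule G.subspace_0[OF ns])
  have RT: "R \<subseteq> T" unfolding R_def T_def using n0 by auto
  have sT: "s \<subseteq> T" unfolding T_def using sn by auto
  have LRR: "LR \<subseteq> R" unfolding LR_def
  proof (rule lc_ideal[OF lf Rs])
    show "\<forall>x\<in>R. \<forall>y. brf x y \<in> R \<and> brf y x \<in> R"
      unfolding R_def using rb la_zerol[OF g] la_zeror[OF g] by simp
  qed
  have LTT: "LT \<subseteq> T" unfolding LT_def
  proof (rule lc_ideal[OF lf Ts])
    show "\<forall>x\<in>T. \<forall>y. brf x y \<in> T \<and> brf y x \<in> T"
      unfolding T_def using rb ncl by simp
  qed
  have LRF: "LR \<subseteq> F'" unfolding LR_def F'_def by (rule lc_mono[OF vf]) auto
  have LSF: "LS \<subseteq> F'" unfolding LS_def F'_def by (rule lc_mono[OF vf]) auto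
  have LTF: "LT \<subseteq> F'" unfolding LT_def F'_def by (rule lc_mono[OF vf]) auto
  have LRT: "LR \<subseteq> LT" unfolding LR_def LT_def by (rule lc_mono[OF vf order_refl RT])
  have LST: "LS \<subseteq> LT" unfolding LS_def LT_def by (rule lc_mono[OF vf order_refl sT])
  have Tsum: "T \<subseteq> {x + y | x y. x \<in> s \<and> y \<in> R}"
  proof
    fix t assume "t \<in> T"
    then have "\<rho> t \<in> \<rho> ` s" unfolding T_def sn by simp
    then obtain x where x: "\<rho> t = \<rho> x" "x \<in> s" by auto
    have "t - x \<in> R" unfolding R_def using x(1) rdiff by simp
    moreover have "t = x + (t - x)" by simp
    ultimately show "t \<in> {x + y | x y. x \<in> s \<and> y \<in> R}" using x(2) by (intro sumsetI) 
  qed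
  have LTsum: "LT \<subseteq> {a + b | a b. a \<in> LS \<and> b \<in> LR}"
    unfolding LT_def LS_def LR_def by (rule lc_sum[OF lf Tsum])
  have rF: "\<rho> ` F' = gg" unfolding F'_def gg_def lc_image[OF lf g hom] using onto by simp
  have rLS: "\<rho> ` LS = gn" unfolding LS_def gn_def lc_image[OF lf g hom] using onto sn by simp
  have rLT: "\<rho> ` LT \<subseteq> gn" unfolding LT_def gn_def lc_image[OF lf g hom]
  proof (rule lc_mono[OF vg])
    show "\<rho> ` UNIV \<subseteq> UNIV" by simp
    show "\<rho> ` T \<subseteq> n" unfolding T_def by auto
  qed
  have gnn: "gn \<subseteq> n" unfolding gn_def by (rule lc_ideal[OF g ns ncl])
  have gng: "gn \<subseteq> gg" unfolding gn_def gg_def by (rule lc_mono[OF vg]) auto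

  obtain Bg where Bg: "finite Bg" "G.span Bg = UNIV" using gfin unfolding fin_dim_def by blast
  have gfd: "\<And>X. fdim scg X" unfolding fdim_def using Bg by blast

  have Kset: "{a \<in> Pp. \<rho> a \<in> gn} = K"
  proof
    show "{a \<in> Pp. \<rho> a \<in> gn} \<subseteq> K"
    proof
      fix a assume "a \<in> {a \<in> Pp. \<rho> a \<in> gn}"
      then have a: "a \<in> T" "a \<in> F'" "\<rho> a \<in> gn" unfolding Pp_def by auto
      then have "\<rho> a \<in> \<rho> ` LS" unfolding rLS by simp
      then obtain l where l: "\<rho> a = \<rho> l" "l \<in> LS" by auto
      have "a - l \<in> R" unfolding R_def using l(1) rdiff by simp
      moreover have "a - l \<in> F'" using F.subspace_diff[OF F's a(2)] l(2) LSF by auto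
      ultimately have "a - l \<in> Q" unfolding Q_def by simp
      moreover have "l \<in> LT" using l(2) LST by auto
      moreover have "a = (a - l) + l" by simp
      ultimately show "a \<in> K" unfolding K_def by (intro sumsetI)
    qed
    show "K \<subseteq> {a \<in> Pp. \<rho> a \<in> gn}"
    proof
      fix a assume "a \<in> K"
      then obtain q l where ql: "a = q + l" "q \<in> Q" "l \<in> LT" unfolding K_def by (rule sumsetE)
      have q: "q \<in> R" "q \<in> F'" using ql(2) unfolding Q_def by auto
      have "q \<in> T" "l \<in> T" using q(1) RT ql(3) LTT by auto
      then have "a \<in> T" using F.subspace_add[OF Ts] ql(1) by simp
      moreover have "a \<in> F'" using F.subspace_add[OF F's q(2)] ql(3) LTF ql(1) by auto
      moreover have "\<rho> a = \<rho> l" using ql(1) q(1) radd unfolding R_def by simp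
      moreover have "\<rho> l \<in> gn" using ql(3) rLT by auto
      ultimately show "a \<in> {a \<in> Pp. \<rho> a \<in> gn}" unfolding Pp_def by simp
    qed
  qed
  have gnI: "gn \<subseteq> n \<inter> gg" using gnn gng by simp
  have rP: "\<rho> ` Pp \<subseteq> n \<inter> gg" unfolding Pp_def T_def using rF by auto
  have covg: "n \<inter> gg \<subseteq> {x + y | x y. x \<in> \<rho> ` Pp \<and> y \<in> gn}"
  proof
    fix y assume y: "y \<in> n \<inter> gg"
    then have "y \<in> \<rho> ` F'" unfolding rF by simp
    then obtain x where x: "y = \<rho> x" "x \<in> F'" by auto
    then have "x \<in> Pp" unfolding Pp_def T_def using y by simp
    then have "y \<in> \<rho> ` Pp" using x(1) by simp
    moreover have "0 \<in> gn" by (rule G.subspace_0[OF gns])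
    moreover have "y = y + 0" by simp
    ultimately show "y \<in> {x + y | x y. x \<in> \<rho> ` Pp \<and> y \<in> gn}" by (intro sumsetI)
  qed
  have sa: "quot_dim scg (n \<inter> gg) gn = quot_dim scf Pp K \<and> (qfd scg (n \<inter> gg) gn \<longleftrightarrow> qfd scf Pp K)"
    using P.quot_iso[OF rl Pps G.subspace_inter[OF ns ggs] gns gnI rP covg] unfolding Kset .
  have qPK: "qfd scf Pp K" using sa gfd unfolding qfd_def by simp

  define L where "L = (\<lambda>e. SOME x. \<rho> x = e) ` Bg"
  have fL: "finite L" unfolding L_def using Bg(1) by simp
  have rL: "\<rho> ` L = Bg"
  proof -
    have "\<rho> (SOME x. \<rho> x = e) = e" for e using onto by (metis (mono_tags) someI_ex surjD)
    then show ?thesis unfolding L_def by (simp add: image_image)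
  qed
  have lift: "\<exists>l\<in>F.span L. x - l \<in> R" for x
  proof -
    have "\<rho> x \<in> G.span (\<rho> ` L)" unfolding rL Bg(2) by simp
    then have "\<rho> x \<in> \<rho> ` F.span L" unfolding P.linear_span_image[OF rl] .
    then obtain l where l: "\<rho> x = \<rho> l" "l \<in> F.span L" by auto
    have "x - l \<in> R" unfolding R_def using l(1) rdiff by simp
    then show ?thesis using l(2) by blast
  qed
  define S where "S = (\<lambda>p. brf (fst p) (snd p) + brf (snd p) (fst p)) ` (L \<times> L)"
  have fS: "finite S" unfolding S_def using fL by simp
  have SF: "F.span S \<subseteq> F'"
  proof (rule F.span_minimal[OF _ F's])
    show "S \<subseteq> F'"
    proof
      fix z assume "z \<in> S"
      then obtain a b where "z = brf a b + brf b a" unfolding S_def by auto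
      then show "z \<in> F'" unfolding F'_def using lc_gen[OF _ _ vf] by simp
    qed
  qed
  have covF: "F' \<subseteq> {x + y | x y. x \<in> F.span S \<and> y \<in> LR}"
  proof -
    have W: "F.subspace {x + y | x y. x \<in> F.span S \<and> y \<in> LR}"
      by (rule F.subspace_sums[OF F.subspace_span LRs])
    have "{brf m n + brf n m | m n. m \<in> UNIV \<and> n \<in> UNIV} \<subseteq> {x + y | x y. x \<in> F.span S \<and> y \<in> LR}"
    proof
      fix z assume "z \<in> {brf m n + brf n m | m n. m \<in> UNIV \<and> n \<in> UNIV}"
      then obtain m n where z: "z = brf m n + brf n m" by blast
      obtain l1 where l1: "l1 \<in> F.span L" "m - l1 \<in> R" using lift by blast
      obtain l2 where l2: "l2 \<in> F.span L" "n - l2 \<in> R" using lift by blast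
      define r1 where "r1 = m - l1"
      define r2 where "r2 = n - l2"
      have m: "m = l1 + r1" and nn: "n = l2 + r2" unfolding r1_def r2_def by simp_all
      have e: "z = (brf l1 l2 + brf l2 l1) + ((brf l1 r2 + brf r2 l1) + ((brf l2 r1 + brf r1 l2) + (brf r1 r2 + brf r2 r1)))"
        unfolding z m nn la_addl[OF lf] la_addr[OF lf] by (simp add: algebra_simps)
      have 1: "brf l1 l2 + brf l2 l1 \<in> F.span S" unfolding S_def by (rule bilin_span[OF lf l1(1) l2(1)])
      have g2: "brf l1 r2 + brf r2 l1 \<in> LR" unfolding LR_def using lc_gen[OF _ _ vf] l2(2) r2_def by simp
      have g3: "brf l2 r1 + brf r1 l2 \<in> LR" unfolding LR_def using lc_gen[OF _ _ vf] l1(2) r1_def by simp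
      have g4: "brf r1 r2 + brf r2 r1 \<in> LR" unfolding LR_def using lc_gen[OF _ _ vf] l2(2) r2_def by simp
      have "(brf l1 r2 + brf r2 l1) + ((brf l2 r1 + brf r1 l2) + (brf r1 r2 + brf r2 r1)) \<in> LR"
        using F.subspace_add[OF LRs] g2 g3 g4 by simp
      then show "z \<in> {x + y | x y. x \<in> F.span S \<and> y \<in> LR}" by (rule sumsetI[OF e 1])
    qed
    then show ?thesis unfolding F'_def lie_comm_def using W by (rule F.span_minimal)
  qed
  have qFLR: "qfd scf F' LR" by (rule F.quot_fin[OF F's LRs fS SF covF])

  have LTK: "LT \<subseteq> K"
  proof
    fix l assume "l \<in> LT"
    moreover have "0 \<in> Q" by (rule F.subspace_0[OF Qs])
    moreover have "l = 0 + l" by simp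
    ultimately show "l \<in> K" unfolding K_def by (intro sumsetI)
  qed
  have KP: "K \<subseteq> Pp" using Kset by auto
  have PF: "Pp \<subseteq> F'" unfolding Pp_def by auto
  have KF: "K \<subseteq> F'" using KP PF by simp
  have qKLT: "qfd scf K LT" by (rule F.quot_sub[OF F's LRs Ks LTs LRT LTK KF qFLR])
  have sb: "quot_dim scf Pp LT = quot_dim scf Pp K + quot_dim scf K LT"
    by (rule F.quot_add[OF Pps Ks LTs LTK KP qPK qKLT])

  have QK: "id ` Q \<subseteq> K"
  proof
    fix q assume "q \<in> id ` Q"
    then have "q \<in> Q" by simp
    moreover have "0 \<in> LT" by (rule F.subspace_0[OF LTs])
    moreover have "q = q + 0" by simp
    ultimately show "q \<in> K" unfolding K_def by (intro sumsetI)
  qed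
  have covK: "K \<subseteq> {x + y | x y. x \<in> id ` Q \<and> y \<in> LT}" unfolding K_def by simp
  have Mset: "{a \<in> Q. id a \<in> LT} = M" unfolding Q_def M_def using LTF by auto
  have sc: "quot_dim scf K LT = quot_dim scf Q M"
    using FF.quot_iso[OF F.linear_id Qs Ks LTs LTK QK covK] unfolding Mset by simp

  have LRM: "LR \<subseteq> M" unfolding M_def using LRR LRT by simp
  have MQ: "M \<subseteq> Q" unfolding M_def Q_def using LTF by auto
  have QF: "Q \<subseteq> F'" unfolding Q_def by auto
  have qQM: "qfd scf Q M" by (rule F.quot_sub[OF F's LRs Qs Ms LRM MQ QF qFLR])
  have MF: "M \<subseteq> F'" using MQ QF by simp
  have qMLR: "qfd scf M LR" by (rule F.quot_sub[OF F's LRs Ms LRs order_refl LRM MF qFLR])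
  have sd: "quot_dim scf Q LR = quot_dim scf Q M + quot_dim scf M LR"
    by (rule F.quot_add[OF Qs Ms LRs LRM MQ qQM qMLR])

  have RLSM: "id ` (R \<inter> LS) \<subseteq> M" unfolding M_def using LST by auto
  have covM: "M \<subseteq> {x + y | x y. x \<in> id ` (R \<inter> LS) \<and> y \<in> LR}"
  proof
    fix m assume m: "m \<in> M"
    then have "m \<in> {a + b | a b. a \<in> LS \<and> b \<in> LR}" using LTsum unfolding M_def by auto
    then obtain x y where xy: "m = x + y" "x \<in> LS" "y \<in> LR" by (rule sumsetE)
    have "x = m - y" using xy(1) by simp
    moreover have "m \<in> R" "y \<in> R" using m xy(3) LRR unfolding M_def by auto
    ultimately have "x \<in> R" using F.subspace_diff[OF Rs] by simp
    then have "x \<in> id ` (R \<inter> LS)" using xy(2) by simp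
    then show "m \<in> {x + y | x y. x \<in> id ` (R \<inter> LS) \<and> y \<in> LR}" using xy(1,3) by (intro sumsetI)
  qed
  have Eset: "{a \<in> R \<inter> LS. id a \<in> LR} = LR \<inter> LS" using LRR by auto
  have se: "quot_dim scf M LR = quot_dim scf (R \<inter> LS) (LR \<inter> LS)"
    using FF.quot_iso[OF F.linear_id RLSs Ms LRs LRM RLSM covM] unfolding Eset by simp

  have final: "quot_dim scf Pp LT + quot_dim scf (R \<inter> LS) (LR \<inter> LS)
      = quot_dim scf Q LR + quot_dim scg (n \<inter> gg) gn"
    using sa sb sc sd se by simp
  show ?thesis using final
    unfolding schur_lie_dim_def Pp_def Q_def T_def R_def LT_def LR_def LS_def F'_def gg_def gn_def .
qed

end
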